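(* Let $\Gamma$ be a simple graph on a finite set $X$ with $|X|\ge3$. 1. $G(\Gamma)$ acts transitively on $X$ if and only if the localized graphs ${}^x\Gamma$, $x\in X$, are pairwise isomorphic. 2. If $G(\Gamma)$ acts doubly transitively on $X$, then for each $x\in X$ the automorphism group $\mathrm{Aut}({}^x\Gamma)$ acts transitively on $X\setminus\{x\}$. 3. If for two distinct points $x,y\in X$ the groups $\mathrm{Aut}({}^x\Gamma)$ and $\mathrm{Aut}({}^y\Gamma)$ act transitively on $X\setminus\{x\}$ and $X\setminus\{y\}$ respectively, then $G(\Gamma)$ acts doubly transitively on $X$.
   Context: The matrix $\mathcal{E}=(\varepsilon_{i,j})$ of a simple graph on $X$ has $\varepsilon_{i,j}=-1$ if $i\ne j$ are adjacent and $1$ otherwise. Graphs with matrices $\mathcal{E},\mathcal{E}'$ are associated if $\varepsilon'_{i,j}=\nu_i\nu_j\varepsilon_{i,j}$ for some $\nu_i\in\{\pm1\}$. $G(\Gamma)$ is the group of permutations $\sigma$ of $X$ such that $\Gamma$ and its image ${}^\sigma\Gamma$ under $\sigma$ are associated. ${}^x\Gamma$ is the unique graph associated to $\Gamma$ in which $x$ is isolated. *)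

theory Defs
  imports "HOL-Combinatorics.Permutations"
begin

definition simple_graph :: "'a set \<Rightarrow> ('a \<Rightarrow> 'a \<Rightarrow> bool) \<Rightarrow> bool" where
  "simple_graph X E \<longleftrightarrow>
     (\<forall>u v. E u v \<longrightarrow> u \<in> X \<and> v \<in> X \<and> u \<noteq> v) \<and> (\<forall>u v. E u v \<longrightarrow> E v u)"

definition eps :: "('a \<Rightarrow> 'a \<Rightarrow> bool) \<Rightarrow> 'a \<Rightarrow> 'a \<Rightarrow> int" where
  "eps E i j = (if i \<noteq> j \<and> E i j then -1 else 1)"

definition associated :: "'a set \<Rightarrow> ('a \<Rightarrow> 'a \<Rightarrow> bool) \<Rightarrow> ('a \<Rightarrow> 'a \<Rightarrow> bool) \<Rightarrow> bool" where
  "associated X E E' \<longleftrightarrow>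
     (\<exists>\<nu> :: 'a \<Rightarrow> int. (\<forall>i\<in>X. \<nu> i = 1 \<or> \<nu> i = -1) \<and>
        (\<forall>i\<in>X. \<forall>j\<in>X. eps E' i j = \<nu> i * \<nu> j * eps E i j))"

definition perm_graph :: "'a set \<Rightarrow> ('a \<Rightarrow> 'a) \<Rightarrow> ('a \<Rightarrow> 'a \<Rightarrow> bool) \<Rightarrow> ('a \<Rightarrow> 'a \<Rightarrow> bool)" where
  "perm_graph X s E = (\<lambda>u v. u \<in> X \<and> v \<in> X \<and> E (inv s u) (inv s v))"

definition switch_group :: "'a set \<Rightarrow> ('a \<Rightarrow> 'a \<Rightarrow> bool) \<Rightarrow> ('a \<Rightarrow> 'a) set" where
  "switch_group X E = {s. s permutes X \<and> associated X E (perm_graph X s E)}"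

text \<open>The localized graph: the unique graph associated to E in which x is isolated.\<close>
definition localized :: "'a set \<Rightarrow> ('a \<Rightarrow> 'a \<Rightarrow> bool) \<Rightarrow> 'a \<Rightarrow> ('a \<Rightarrow> 'a \<Rightarrow> bool)" where
  "localized X E x = (THE E'. simple_graph X E' \<and> associated X E E' \<and> (\<forall>y. \<not> E' x y))"

definition aut :: "'a set \<Rightarrow> ('a \<Rightarrow> 'a \<Rightarrow> bool) \<Rightarrow> ('a \<Rightarrow> 'a) set" where
  "aut X E = {s. s permutes X \<and> (\<forall>u\<in>X. \<forall>v\<in>X. E u v \<longleftrightarrow> E (s u) (s v))}"

definition graph_iso :: "'a set \<Rightarrow> ('a \<Rightarrow> 'a \<Rightarrow> bool) \<Rightarrow> ('a \<Rightarrow> 'a \<Rightarrow> bool) \<Rightarrow> bool" where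
  "graph_iso X E E' \<longleftrightarrow>
     (\<exists>f. bij_betw f X X \<and> (\<forall>u\<in>X. \<forall>v\<in>X. E u v \<longleftrightarrow> E' (f u) (f v)))"

definition transitive_on :: "('a \<Rightarrow> 'a) set \<Rightarrow> 'a set \<Rightarrow> bool" where
  "transitive_on G Y \<longleftrightarrow> (\<forall>y\<in>Y. \<forall>z\<in>Y. \<exists>s\<in>G. s y = z)"

definition doubly_transitive_on :: "('a \<Rightarrow> 'a) set \<Rightarrow> 'a set \<Rightarrow> bool" where
  "doubly_transitive_on G Y \<longleftrightarrow>
     (\<forall>y1\<in>Y. \<forall>y2\<in>Y. \<forall>z1\<in>Y. \<forall>z2\<in>Y. y1 \<noteq> y2 \<longrightarrow> z1 \<noteq> z2 \<longrightarrow>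
        (\<exists>s\<in>G. s y1 = z1 \<and> s y2 = z2))"

end

theory Submission
  imports Defs
begin

definition tri :: "('a \<Rightarrow> 'a \<Rightarrow> bool) \<Rightarrow> 'a \<Rightarrow> 'a \<Rightarrow> 'a \<Rightarrow> int" where
  "tri E a b c = eps E a b * eps E b c * eps E a c"

definition GI :: "'a set \<Rightarrow> ('a \<Rightarrow> 'a \<Rightarrow> bool) \<Rightarrow> ('a \<Rightarrow> 'a) \<Rightarrow> bool" where
  "GI X E s \<longleftrightarrow> s permutes X \<and> (\<forall>u\<in>X. \<forall>v\<in>X. \<forall>w\<in>X. tri E (s u) (s v) (s w) = tri E u v w)"

lemma eps_sq: "eps E a b * eps E a b = 1"
  by (simp add: eps_def)

lemma tri_pm: "tri E a b c = 1 \<or> tri E a b c = -1"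
  by (simp add: tri_def eps_def)

lemma eps_sym: "simple_graph X E \<Longrightarrow> eps E a b = eps E b a"
  unfolding simple_graph_def eps_def by auto

lemma tri_xxc: "tri E x x c = 1" and tri_xcc: "tri E x c c = 1"
  by (simp_all add: tri_def eps_def)

lemma tri_23: "simple_graph X E \<Longrightarrow> tri E x a b = tri E x b a"
  unfolding tri_def using eps_sym[of X E] by (simp add: mult_ac)

lemma cocycle: "tri E u v w = tri E x u v * tri E x v w * tri E x u w"
  by (simp add: tri_def eps_def)

lemma assoc_tri:
  assumes "X \<noteq> {}"
  shows "associated X E E' \<longleftrightarrow> (\<forall>a\<in>X. \<forall>b\<in>X. \<forall>c\<in>X. tri E' a b c = tri E a b c)"
proof
  assume "associated X E E'"
  then obtain \<nu> :: "'a \<Rightarrow> int" where nu: "\<forall>i\<in>X. \<nu> i = 1 \<or> \<nu> i = -1"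
    and e: "\<forall>i\<in>X. \<forall>j\<in>X. eps E' i j = \<nu> i * \<nu> j * eps E i j"
    unfolding associated_def by blast
  have sq: "\<nu> i * \<nu> i = 1" if "i \<in> X" for i using nu that by auto
  show "\<forall>a\<in>X. \<forall>b\<in>X. \<forall>c\<in>X. tri E' a b c = tri E a b c"
  proof (intro ballI)
    fix a b c assume abc: "a \<in> X" "b \<in> X" "c \<in> X"
    have "tri E' a b c = (\<nu> a * \<nu> a) * (\<nu> b * \<nu> b) * (\<nu> c * \<nu> c) * tri E a b c"
      using abc e by (simp add: tri_def mult_ac)
    then show "tri E' a b c = tri E a b c" using sq abc by simp
  qed
next
  assume T: "\<forall>a\<in>X. \<forall>b\<in>X. \<forall>c\<in>X. tri E' a b c = tri E a b c"
  obtain x where x: "x \<in> X" using assms by blast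
  define \<nu> where "\<nu> i = eps E' x i * eps E x i" for i
  show "associated X E E'"
    unfolding associated_def
  proof (intro exI[of _ \<nu>] conjI ballI)
    fix i assume "i \<in> X" show "\<nu> i = 1 \<or> \<nu> i = -1" by (simp add: \<nu>_def eps_def)
  next
    fix i j assume ij: "i \<in> X" "j \<in> X"
    have "\<nu> i * \<nu> j * eps E i j = eps E' x i * eps E' x j * tri E x i j"
      by (simp add: \<nu>_def tri_def mult_ac)
    also have "\<dots> = eps E' x i * eps E' x j * tri E' x i j" using T x ij by simp
    also have "\<dots> = eps E' i j" by (simp add: tri_def eps_def)
    finally show "eps E' i j = \<nu> i * \<nu> j * eps E i j" by simp
  qed
qed

lemma loc:
  assumes sg: "simple_graph X E" and x: "x \<in> X"
  shows "localized X E x = (\<lambda>u v. u \<in> X \<and> v \<in> X \<and> u \<noteq> v \<and> tri E x u v = -1)"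
    (is "_ = ?F")
  unfolding localized_def
proof (rule the_equality)
  have epsF: "eps ?F a b = tri E x a b" if "a \<in> X" "b \<in> X" for a b
    using that tri_pm[of E x a b] tri_xcc[of E x a] by (auto simp: eps_def)
  show "simple_graph X ?F \<and> associated X E ?F \<and> (\<forall>y. \<not> ?F x y)"
  proof (intro conjI)
    show "simple_graph X ?F" unfolding simple_graph_def using tri_23[OF sg] by auto
    show "associated X E ?F"
    proof (subst assoc_tri[OF ex_in_conv[THEN iffD1, OF exI, OF x]], intro ballI)
      fix a b c assume abc: "a \<in> X" "b \<in> X" "c \<in> X"
      have "tri ?F a b c = tri E x a b * tri E x b c * tri E x a c"
        using abc by (simp add: tri_def[of ?F] epsF)
      then show "tri ?F a b c = tri E a b c" using cocycle[of E a b c x] by simp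
    qed
    show "\<forall>y. \<not> ?F x y" using tri_xxc[of E x] by auto
  qed
next
  fix E' assume h: "simple_graph X E' \<and> associated X E E' \<and> (\<forall>y. \<not> E' x y)"
  have T: "\<forall>a\<in>X. \<forall>b\<in>X. \<forall>c\<in>X. tri E' a b c = tri E a b c" using h x assoc_tri[of X E E'] by blast
  show "E' = ?F"
  proof (intro ext)
    fix u v
    show "E' u v = ?F u v"
    proof (cases "u \<in> X \<and> v \<in> X")
      case False then show ?thesis using h unfolding simple_graph_def by auto
    next
      case True
      have "eps E' u v = tri E' x u v" using h by (simp add: tri_def eps_def)
      also have "\<dots> = tri E x u v" using T True x by simp
      finally have "eps E' u v = tri E x u v" .
      moreover have "E' u v \<longleftrightarrow> u \<noteq> v \<and> eps E' u v = -1"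
        using h unfolding simple_graph_def eps_def by auto
      ultimately show ?thesis using True by auto
    qed
  qed
qed

lemma eps_perm:
  assumes "s permutes X" "u \<in> X" "v \<in> X"
  shows "eps (perm_graph X s E) u v = eps E (inv s u) (inv s v)"
proof -
  have "inv s u = inv s v \<longleftrightarrow> u = v"
    by (metis assms(1) permutes_inverses(1))
  then show ?thesis using assms by (simp add: eps_def perm_graph_def)
qed

lemma G_char:
  assumes "X \<noteq> {}"
  shows "s \<in> switch_group X E \<longleftrightarrow> GI X E s"
proof -
  have A: "associated X E (perm_graph X s E) \<longleftrightarrow>
      (\<forall>a\<in>X. \<forall>b\<in>X. \<forall>c\<in>X. tri E (inv s a) (inv s b) (inv s c) = tri E a b c)"
    if p: "s permutes X"
    using assoc_tri[OF assms, of E "perm_graph X s E"] p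
    by (simp add: tri_def eps_perm)
  have B: "(\<forall>a\<in>X. \<forall>b\<in>X. \<forall>c\<in>X. tri E (inv s a) (inv s b) (inv s c) = tri E a b c) \<longleftrightarrow>
      (\<forall>u\<in>X. \<forall>v\<in>X. \<forall>w\<in>X. tri E (s u) (s v) (s w) = tri E u v w)"
    if p: "s permutes X"
  proof
    assume h: "\<forall>a\<in>X. \<forall>b\<in>X. \<forall>c\<in>X. tri E (inv s a) (inv s b) (inv s c) = tri E a b c"
    show "\<forall>u\<in>X. \<forall>v\<in>X. \<forall>w\<in>X. tri E (s u) (s v) (s w) = tri E u v w"
    proof (intro ballI)
      fix u v w assume "u \<in> X" "v \<in> X" "w \<in> X"
      then show "tri E (s u) (s v) (s w) = tri E u v w"
        using h[rule_format, of "s u" "s v" "s w"] p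
        by (simp add: permutes_in_image permutes_inverses)
    qed
  next
    assume h: "\<forall>u\<in>X. \<forall>v\<in>X. \<forall>w\<in>X. tri E (s u) (s v) (s w) = tri E u v w"
    show "\<forall>a\<in>X. \<forall>b\<in>X. \<forall>c\<in>X. tri E (inv s a) (inv s b) (inv s c) = tri E a b c"
    proof (intro ballI)
      fix u v w assume "u \<in> X" "v \<in> X" "w \<in> X"
      then show "tri E (inv s u) (inv s v) (inv s w) = tri E u v w"
        using h[rule_format, of "inv s u" "inv s v" "inv s w"] p permutes_inv[OF p]
        by (simp add: permutes_in_image permutes_inverses)
    qed
  qed
  show ?thesis unfolding switch_group_def GI_def using A B by auto
qed

lemma loc_tri:
  assumes sg: "simple_graph X E" and x: "x \<in> X" and y: "y \<in> X"
    and f: "\<forall>u\<in>X. f u \<in> X" and inj: "inj_on f X"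
  shows "(\<forall>u\<in>X. \<forall>v\<in>X. localized X E x u v \<longleftrightarrow> localized X E y (f u) (f v)) \<longleftrightarrow>
         (\<forall>u\<in>X. \<forall>v\<in>X. tri E x u v = tri E y (f u) (f v))"
proof -
  have ne: "f u \<noteq> f v \<longleftrightarrow> u \<noteq> v" if "u \<in> X" "v \<in> X" for u v
    using inj that by (auto dest: inj_onD)
  have "(localized X E x u v \<longleftrightarrow> localized X E y (f u) (f v)) \<longleftrightarrow> tri E x u v = tri E y (f u) (f v)"
    if uv: "u \<in> X" "v \<in> X" for u v
  proof (cases "u = v")
    case True then show ?thesis using tri_xcc[of E] by (simp add: loc[OF sg x] loc[OF sg y])
  next
    case False
    then show ?thesis using uv f ne[OF uv] tri_pm[of E x u v] tri_pm[of E y "f u" "f v"]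
      by (auto simp: loc[OF sg x] loc[OF sg y])
  qed
  then show ?thesis by blast
qed

lemma iso_GI:
  assumes p: "s permutes X" and x: "x \<in> X" and y: "y \<in> X"
    and h: "\<forall>u\<in>X. \<forall>v\<in>X. tri E y (s u) (s v) = tri E x u v"
  shows "GI X E s"
  unfolding GI_def
proof (intro conjI p ballI)
  fix u v w assume uvw: "u \<in> X" "v \<in> X" "w \<in> X"
  have "tri E (s u) (s v) (s w) = tri E y (s u) (s v) * tri E y (s v) (s w) * tri E y (s u) (s w)"
    by (rule cocycle)
  also have "\<dots> = tri E x u v * tri E x v w * tri E x u w" using h uvw by simp
  also have "\<dots> = tri E u v w" by (rule cocycle[symmetric])
  finally show "tri E (s u) (s v) (s w) = tri E u v w" .
qed

lemma swap_lem:
  assumes sg: "simple_graph X E"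
    and a: "\<forall>c\<in>X. tri E x a c = 1" and b: "\<forall>c\<in>X. tri E x b c = 1"
    and u: "u \<in> X" and v: "v \<in> X"
  shows "tri E x (transpose a b u) (transpose a b v) = tri E x u v"
proof -
  have a': "\<forall>c\<in>X. tri E x c a = 1" and b': "\<forall>c\<in>X. tri E x c b = 1"
    using a b tri_23[OF sg] by metis+
  show ?thesis
    using u v a b a' b' by (cases "u = a"; cases "u = b"; cases "v = a"; cases "v = b") (auto simp: tri_xcc)
qed

lemma GI_comp: "GI X E s \<Longrightarrow> GI X E t \<Longrightarrow> GI X E (t \<circ> s)"
  unfolding GI_def by (auto simp: permutes_compose permutes_in_image)

lemma GI_inv: assumes "GI X E s" shows "GI X E (inv s)"
proof -
  have p: "s permutes X" and h: "\<forall>u\<in>X. \<forall>v\<in>X. \<forall>w\<in>X. tri E (s u) (s v) (s w) = tri E u v w"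
    using assms unfolding GI_def by auto
  show ?thesis unfolding GI_def
  proof (intro conjI permutes_inv[OF p] ballI)
    fix u v w assume "u \<in> X" "v \<in> X" "w \<in> X"
    then show "tri E (inv s u) (inv s v) (inv s w) = tri E u v w"
      using h[rule_format, of "inv s u" "inv s v" "inv s w"] p permutes_inv[OF p]
      by (simp add: permutes_in_image permutes_inverses)
  qed
qed

lemma GI_id: "GI X E id"
  unfolding GI_def by (simp add: permutes_id)

lemma trans_get: "transitive_on G Y \<Longrightarrow> a \<in> Y \<Longrightarrow> b \<in> Y \<Longrightarrow> \<exists>s\<in>G. s a = b"
  by (simp add: transitive_on_def)

lemma part1a:
  assumes sg: "simple_graph X E" and ne: "X \<noteq> {}"
    and tr: "transitive_on (switch_group X E) X" and x: "x \<in> X" and y: "y \<in> X"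
  shows "graph_iso X (localized X E x) (localized X E y)"
proof -
  obtain s where s: "s \<in> switch_group X E" "s x = y" using tr x y unfolding transitive_on_def by blast
  have g: "GI X E s" using s G_char[OF ne] by blast
  then have p: "s permutes X" unfolding GI_def by blast
  have "\<forall>u\<in>X. \<forall>v\<in>X. tri E x u v = tri E y (s u) (s v)"
  proof (intro ballI)
    fix u v assume "u \<in> X" "v \<in> X"
    then have "tri E (s x) (s u) (s v) = tri E x u v" using g x unfolding GI_def by blast
    then show "tri E x u v = tri E y (s u) (s v)" using s(2) by simp
  qed
  then have "\<forall>u\<in>X. \<forall>v\<in>X. localized X E x u v \<longleftrightarrow> localized X E y (s u) (s v)"
    using loc_tri[OF sg x y, of s] p by (simp add: permutes_in_image permutes_inj_on)
  then show ?thesis unfolding graph_iso_def using permutes_imp_bij[OF p] by blast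
qed

lemma part1b:
  assumes sg: "simple_graph X E" and ne: "X \<noteq> {}"
    and iso: "\<forall>x\<in>X. \<forall>y\<in>X. graph_iso X (localized X E x) (localized X E y)"
  shows "transitive_on (switch_group X E) X"
  unfolding transitive_on_def
proof (intro ballI)
  fix x y assume x: "x \<in> X" and y: "y \<in> X"
  obtain f where bf: "bij_betw f X X"
    and L: "\<forall>u\<in>X. \<forall>v\<in>X. localized X E x u v \<longleftrightarrow> localized X E y (f u) (f v)"
    using iso x y unfolding graph_iso_def by blast
  define f' where "f' z = (if z \<in> X then f z else z)" for z
  have bf': "bij_betw f' X X" using bf by (rule bij_betw_cong[THEN iffD1, rotated]) (simp add: f'_def)
  have pf: "f' permutes X" by (rule bij_imp_permutes[OF bf']) (simp add: f'_def)
  have L': "\<forall>u\<in>X. \<forall>v\<in>X. localized X E x u v \<longleftrightarrow> localized X E y (f' u) (f' v)"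
    using L by (simp add: f'_def)
  have T: "\<forall>u\<in>X. \<forall>v\<in>X. tri E x u v = tri E y (f' u) (f' v)"
    using loc_tri[OF sg x y, of f'] L' pf by (simp add: permutes_in_image permutes_inj_on)
  have fx: "f' x \<in> X" using x pf by (simp add: permutes_in_image)
  have iso1: "\<forall>c\<in>X. tri E y (f' x) c = 1"
  proof
    fix c assume c: "c \<in> X"
    have "tri E y (f' x) c = tri E y (f' x) (f' (inv f' c))" using pf by (simp add: permutes_inverses)
    also have "\<dots> = tri E x x (inv f' c)" using T x c permutes_inv[OF pf]
      by (simp add: permutes_in_image)
    finally show "tri E y (f' x) c = 1" by (simp add: tri_xxc)
  qed
  have iso2: "\<forall>c\<in>X. tri E y y c = 1" by (simp add: tri_xxc)
  define s where "s = transpose (f' x) y \<circ> f'"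
  have ps: "s permutes X" unfolding s_def by (intro permutes_compose pf permutes_swap_id fx y)
  have "\<forall>u\<in>X. \<forall>v\<in>X. tri E y (s u) (s v) = tri E x u v"
    using swap_lem[OF sg iso1 iso2] T pf by (simp add: s_def permutes_in_image)
  then have "GI X E s" by (rule iso_GI[OF ps x y])
  moreover have "s x = y" by (simp add: s_def)
  ultimately show "\<exists>s\<in>switch_group X E. s x = y" using G_char[OF ne] by blast
qed

lemma part2:
  assumes sg: "simple_graph X E" and ne: "X \<noteq> {}"
    and dt: "doubly_transitive_on (switch_group X E) X" and x: "x \<in> X"
  shows "transitive_on (aut X (localized X E x)) (X - {x})"
  unfolding transitive_on_def
proof (intro ballI)
  fix y z assume y: "y \<in> X - {x}" and z: "z \<in> X - {x}"
  obtain s where s: "s \<in> switch_group X E" "s x = x" "s y = z"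
  proof -
    have "x \<noteq> y" "x \<noteq> z" "y \<in> X" "z \<in> X" using y z by auto
    then show ?thesis using that dt[unfolded doubly_transitive_on_def, rule_format, of x y x z] x by blast
  qed
  have g: "GI X E s" using s G_char[OF ne] by blast
  then have p: "s permutes X" unfolding GI_def by blast
  have "\<forall>u\<in>X. \<forall>v\<in>X. tri E x u v = tri E x (s u) (s v)"
  proof (intro ballI)
    fix u v assume "u \<in> X" "v \<in> X"
    then have "tri E (s x) (s u) (s v) = tri E x u v" using g x unfolding GI_def by blast
    then show "tri E x u v = tri E x (s u) (s v)" using s(2) by simp
  qed
  moreover have "\<forall>u\<in>X. s u \<in> X" "inj_on s X" using p by (simp_all add: permutes_in_image permutes_inj_on)
  ultimately have "\<forall>u\<in>X. \<forall>v\<in>X. localized X E x u v \<longleftrightarrow> localized X E x (s u) (s v)"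
    using loc_tri[OF sg x x, of s] by blast
  then have "s \<in> aut X (localized X E x)" unfolding aut_def using p by blast
  then show "\<exists>s\<in>aut X (localized X E x). s y = z" using s(3) by blast
qed

lemma aut_tri:
  assumes sg: "simple_graph X E" and x: "x \<in> X" and a: "a \<in> aut X (localized X E x)"
  shows "a permutes X" "\<forall>u\<in>X. \<forall>v\<in>X. tri E x (a u) (a v) = tri E x u v" "GI X E a"
proof -
  show p: "a permutes X" using a unfolding aut_def by blast
  have "\<forall>u\<in>X. \<forall>v\<in>X. localized X E x u v \<longleftrightarrow> localized X E x (a u) (a v)"
    using a unfolding aut_def by blast
  moreover have "\<forall>u\<in>X. a u \<in> X" "inj_on a X" using p by (simp_all add: permutes_in_image permutes_inj_on)
  ultimately have "\<forall>u\<in>X. \<forall>v\<in>X. tri E x u v = tri E x (a u) (a v)"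
    using loc_tri[OF sg x x, of a] by blast
  then show T: "\<forall>u\<in>X. \<forall>v\<in>X. tri E x (a u) (a v) = tri E x u v" by metis
  show "GI X E a" using iso_GI[OF p x x T] .
qed

lemma stab:
  assumes sg: "simple_graph X E" and x: "x \<in> X"
    and tr: "transitive_on (aut X (localized X E x)) (X - {x})"
    and u: "u \<in> X - {x}" and v: "v \<in> X - {x}"
  shows "\<exists>k. GI X E k \<and> k x = x \<and> k u = v"
proof -
  obtain a where a: "a \<in> aut X (localized X E x)" "a u = v"
    using trans_get[OF tr u v] by blast
  note A = aut_tri[OF sg x a(1)]
  have ax: "a x \<in> X" using A(1) x by (simp add: permutes_in_image)
  have iso1: "\<forall>c\<in>X. tri E x (a x) c = 1"
  proof
    fix c assume c: "c \<in> X"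
    have "tri E x (a x) c = tri E x (a x) (a (inv a c))" using A(1) by (simp add: permutes_inverses)
    also have "\<dots> = tri E x x (inv a c)"
      using A(2)[rule_format, OF x, of "inv a c"] c permutes_inv[OF A(1)]
      by (simp add: permutes_in_image)
    finally show "tri E x (a x) c = 1" by (simp add: tri_xxc)
  qed
  have iso2: "\<forall>c\<in>X. tri E x x c = 1" by (simp add: tri_xxc)
  define k where "k = transpose x (a x) \<circ> a"
  have pk: "k permutes X" unfolding k_def by (intro permutes_compose A(1) permutes_swap_id ax x)
  have "\<forall>w\<in>X. \<forall>z\<in>X. tri E x (k w) (k z) = tri E x w z"
  proof (intro ballI)
    fix w z assume wz: "w \<in> X" "z \<in> X"
    then have "a w \<in> X" "a z \<in> X" using A(1) by (simp_all add: permutes_in_image)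
    then have "tri E x (k w) (k z) = tri E x (a w) (a z)"
      unfolding k_def o_def by (rule swap_lem[OF sg iso2 iso1])
    also have "\<dots> = tri E x w z" using A(2) wz by blast
    finally show "tri E x (k w) (k z) = tri E x w z" .
  qed
  then have "GI X E k" by (rule iso_GI[OF pk x x])
  moreover have "k x = x" by (simp add: k_def)
  moreover have "a u \<noteq> a x" using u permutes_inj[OF A(1)] by (auto dest: injD)
  then have "v \<noteq> a x" using a(2) by simp
  then have "k u = v" using a(2) v by (simp add: k_def)
  ultimately show ?thesis by blast
qed

lemma part3:
  assumes sg: "simple_graph X E" and c3: "card X \<ge> 3" and fin: "finite X"
    and x: "x \<in> X" and y: "y \<in> X" and xy: "x \<noteq> y"
    and trx: "transitive_on (aut X (localized X E x)) (X - {x})"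
    and tRy: "transitive_on (aut X (localized X E y)) (X - {y})"
  shows "doubly_transitive_on (switch_group X E) X"
proof -
  have ne: "X \<noteq> {}" using x by blast
  have toX: "\<exists>g. GI X E g \<and> g a = x" if a: "a \<in> X" for a
  proof (cases "a = x")
    case True then show ?thesis using GI_id[of X E] by (intro exI[of _ id]) simp
  next
    case ax: False
    show ?thesis
    proof (cases "a = y")
      case False
      then obtain b where "b \<in> aut X (localized X E y)" "b a = x"
        using trans_get[OF tRy, of a x] a x xy False by auto
      then show ?thesis using aut_tri[OF sg y] by blast
    next
      case True
      have "\<not> X \<subseteq> {x, y}"
      proof
        assume "X \<subseteq> {x, y}"
        then have "card X \<le> card {x, y}" by (simp add: card_mono)
        also have "\<dots> \<le> 2" by (simp add: card_insert_if)
        finally show False using c3 by simp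
      qed
      then obtain c where c: "c \<in> X" "c \<noteq> x" "c \<noteq> y" by blast
      obtain b1 where b1: "b1 \<in> aut X (localized X E x)" "b1 y = c"
        using trans_get[OF trx, of y c] y c xy by auto
      obtain b2 where b2: "b2 \<in> aut X (localized X E y)" "b2 c = x"
        using trans_get[OF tRy, of c x] x c xy by auto
      have "GI X E (b2 \<circ> b1)" using GI_comp aut_tri(3)[OF sg x b1(1)] aut_tri(3)[OF sg y b2(1)] by blast
      then show ?thesis using True b1 b2 by auto
    qed
  qed
  show ?thesis unfolding doubly_transitive_on_def
  proof (intro ballI impI)
    fix y1 y2 z1 z2 assume yz: "y1 \<in> X" "y2 \<in> X" "z1 \<in> X" "z2 \<in> X" "y1 \<noteq> y2" "z1 \<noteq> z2"
    obtain g where g: "GI X E g" "g y1 = x" using toX yz by blast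
    obtain h where h: "GI X E h" "h z1 = x" using toX yz by blast
    have pg: "g permutes X" and ph: "h permutes X" using g h unfolding GI_def by auto
    have "g y2 \<noteq> g y1" using yz(5) permutes_inj[OF pg] by (auto dest: injD)
    then have gy2: "g y2 \<in> X - {x}" using yz g(2) pg by (simp add: permutes_in_image)
    have "h z2 \<noteq> h z1" using yz(6) permutes_inj[OF ph] by (auto dest: injD)
    then have hz2: "h z2 \<in> X - {x}" using yz h(2) ph by (simp add: permutes_in_image)
    obtain k where k: "GI X E k" "k x = x" "k (g y2) = h z2"
      using stab[OF sg x trx gy2 hz2] by blast
    define s where "s = inv h \<circ> (k \<circ> g)"
    have "GI X E s" unfolding s_def by (intro GI_comp GI_inv g h k)
    moreover have "s y1 = z1" using g(2) h(2) k(2) ph by (simp add: s_def permutes_inv_eq)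
    moreover have "s y2 = z2" using k(3) ph by (simp add: s_def permutes_inverses)
    ultimately show "\<exists>s\<in>switch_group X E. s y1 = z1 \<and> s y2 = z2" using G_char[OF ne] by blast
  qed
qed

theorem proposition4:
  fixes X :: "'a set" and E :: "'a \<Rightarrow> 'a \<Rightarrow> bool"
  assumes "finite X" and "card X \<ge> 3" and "simple_graph X E"
  shows "(transitive_on (switch_group X E) X \<longleftrightarrow>
            (\<forall>x\<in>X. \<forall>y\<in>X. graph_iso X (localized X E x) (localized X E y)))
       \<and> (doubly_transitive_on (switch_group X E) X \<longrightarrow>
            (\<forall>x\<in>X. transitive_on (aut X (localized X E x)) (X - {x})))
       \<and> (\<forall>x\<in>X. \<forall>y\<in>X. x \<noteq> y \<longrightarrow>
            transitive_on (aut X (localized X E x)) (X - {x}) \<longrightarrow>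
            transitive_on (aut X (localized X E y)) (X - {y}) \<longrightarrow>
            doubly_transitive_on (switch_group X E) X)"
proof -
  have ne: "X \<noteq> {}" using assms(2) by auto
  show ?thesis
  proof (intro conjI iffI ballI impI)
    assume "transitive_on (switch_group X E) X"
    fix x y assume "x \<in> X" "y \<in> X"
    then show "graph_iso X (localized X E x) (localized X E y)"
      by (rule part1a[OF assms(3) ne \<open>transitive_on (switch_group X E) X\<close>])
  next
    assume "\<forall>x\<in>X. \<forall>y\<in>X. graph_iso X (localized X E x) (localized X E y)"
    then show "transitive_on (switch_group X E) X" by (rule part1b[OF assms(3) ne])
  next
    fix x assume "doubly_transitive_on (switch_group X E) X" "x \<in> X"
    then show "transitive_on (aut X (localized X E x)) (X - {x})" by (rule part2[OF assms(3) ne])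
  next
    fix x y assume "x \<in> X" "y \<in> X" "x \<noteq> y"
      "transitive_on (aut X (localized X E x)) (X - {x})"
      "transitive_on (aut X (localized X E y)) (X - {y})"
    then show "doubly_transitive_on (switch_group X E) X"
      by (rule part3[OF assms(3) assms(2) assms(1)])
  qed
qed

end
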